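(* Let $A$ be a finite skew brace such that $\Lambda(A)$ has exactly one vertex and $\ker\lambda\cap\operatorname{Fix}(A)=\{0\}$. Then $(\operatorname{Fix}(A),+)$ is an abelian group of odd order, $\operatorname{Fix}(A)$ is a trivial skew brace, and $A$ is isomorphic to the skew brace on $\operatorname{Fix}(A)\times\mathbb{Z}/2\mathbb{Z}$ with operations \[(f_1,k_1)+(f_2,k_2)=\big(f_1+(-1)^{k_1}f_2,\,k_1+k_2\big),\qquad (f_1,k_1)\circ(f_2,k_2)=\big((-1)^{k_2}f_1+(-1)^{k_1}f_2,\,k_1+k_2\big).\] Conversely, if $F$ is a non-trivial abelian group of odd order, then $A=F\times\mathbb{Z}/2\mathbb{Z}$ with these operations is a skew brace with $\operatorname{Fix}(A)=F\times\{0\}$, $\ker\lambda=\{0\}\times\mathbb{Z}/2\mathbb{Z}$, and $\Lambda(A)$ has exactly one vertex.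
   Context: A skew brace is a triple $(A,+,\circ)$ where $(A,+)$ and $(A,\circ)$ are groups with $a\circ(b+c)=a\circ b-a+a\circ c$. $\lambda_a(b)=-a+a\circ b$ gives a homomorphism $\lambda\colon(A,\circ)\to\operatorname{Aut}(A,+)$ with kernel $\ker\lambda$. $\operatorname{Fix}(A)=\{a\in A:\lambda_x(a)=a\ \forall x\in A\}$. A trivial skew brace is one with $a+b=a\circ b$ for all $a,b$. $\Lambda(A)$ is the graph whose vertices are the $\lambda$-orbits of size $>1$, two distinct vertices $L_1,L_2$ adjacent iff $\gcd(|L_1|,|L_2|)\ne1$. *)

theory Defs
  imports "HOL-Algebra.Algebra"
begin

text \<open>A skew brace is given by two group structures P = (A,+) and C = (A,\<circ>)
  (HOL-Algebra monoid records) on the same carrier, satisfying the brace compatibility law.\<close>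

definition skew_brace :: "('a, 'm) monoid_scheme \<Rightarrow> ('a, 'n) monoid_scheme \<Rightarrow> bool" where
  "skew_brace P C \<longleftrightarrow> group P \<and> group C \<and> carrier P = carrier C \<and>
     (\<forall>a\<in>carrier C. \<forall>b\<in>carrier C. \<forall>c\<in>carrier C.
        a \<otimes>\<^bsub>C\<^esub> (b \<otimes>\<^bsub>P\<^esub> c)
          = (a \<otimes>\<^bsub>C\<^esub> b) \<otimes>\<^bsub>P\<^esub> inv\<^bsub>P\<^esub> a \<otimes>\<^bsub>P\<^esub> (a \<otimes>\<^bsub>C\<^esub> c))"

definition trivial_skew_brace :: "('a, 'm) monoid_scheme \<Rightarrow> ('a, 'n) monoid_scheme \<Rightarrow> bool" where
  "trivial_skew_brace P C \<longleftrightarrow> skew_brace P C \<and>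
     (\<forall>a\<in>carrier P. \<forall>b\<in>carrier P. a \<otimes>\<^bsub>P\<^esub> b = a \<otimes>\<^bsub>C\<^esub> b)"

definition brace_lambda :: "('a, 'm) monoid_scheme \<Rightarrow> ('a, 'n) monoid_scheme \<Rightarrow> 'a \<Rightarrow> 'a \<Rightarrow> 'a" where
  "brace_lambda P C a b = inv\<^bsub>P\<^esub> a \<otimes>\<^bsub>P\<^esub> (a \<otimes>\<^bsub>C\<^esub> b)"

definition brace_ker :: "('a, 'm) monoid_scheme \<Rightarrow> ('a, 'n) monoid_scheme \<Rightarrow> 'a set" where
  "brace_ker P C = {a \<in> carrier C. \<forall>b\<in>carrier P. brace_lambda P C a b = b}"

definition brace_Fix :: "('a, 'm) monoid_scheme \<Rightarrow> ('a, 'n) monoid_scheme \<Rightarrow> 'a set" where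
  "brace_Fix P C = {a \<in> carrier P. \<forall>x\<in>carrier C. brace_lambda P C x a = a}"

definition lambda_orbits :: "('a, 'm) monoid_scheme \<Rightarrow> ('a, 'n) monoid_scheme \<Rightarrow> 'a set set" where
  "lambda_orbits P C = (\<lambda>b. (\<lambda>a. brace_lambda P C a b) ` carrier C) ` carrier P"

definition Lambda_vertices :: "('a, 'm) monoid_scheme \<Rightarrow> ('a, 'n) monoid_scheme \<Rightarrow> 'a set set" where
  "Lambda_vertices P C = {L \<in> lambda_orbits P C. card L > 1}"

definition Lambda_adj :: "('a, 'm) monoid_scheme \<Rightarrow> ('a, 'n) monoid_scheme \<Rightarrow> 'a set \<Rightarrow> 'a set \<Rightarrow> bool" where
  "Lambda_adj P C L1 L2 \<longleftrightarrow> L1 \<in> Lambda_vertices P C \<and> L2 \<in> Lambda_vertices P C \<and> L1 \<noteq> L2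
     \<and> gcd (card L1) (card L2) \<noteq> 1"

definition skew_brace_iso ::
  "('a, 'm) monoid_scheme \<Rightarrow> ('a, 'n) monoid_scheme \<Rightarrow> ('b, 'k) monoid_scheme \<Rightarrow> ('b, 'l) monoid_scheme
     \<Rightarrow> ('a \<Rightarrow> 'b) \<Rightarrow> bool" where
  "skew_brace_iso P C P' C' f \<longleftrightarrow> bij_betw f (carrier P) (carrier P') \<and>
     f \<in> hom P P' \<and> f \<in> hom C C'"

text \<open>Z/2Z is modelled by bool (True = 1, addition = xor); (-1)^k f.\<close>
definition sgn_act :: "('a, 'm) monoid_scheme \<Rightarrow> bool \<Rightarrow> 'a \<Rightarrow> 'a" where
  "sgn_act G k f = (if k then inv\<^bsub>G\<^esub> f else f)"

definition model_add :: "('a, 'm) monoid_scheme \<Rightarrow> ('a \<times> bool) monoid" where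
  "model_add G = \<lparr> carrier = carrier G \<times> (UNIV :: bool set),
     monoid.mult = (\<lambda>(f1, k1) (f2, k2). (f1 \<otimes>\<^bsub>G\<^esub> sgn_act G k1 f2, k1 \<noteq> k2)),
     monoid.one = (\<one>\<^bsub>G\<^esub>, False) \<rparr>"

definition model_comp :: "('a, 'm) monoid_scheme \<Rightarrow> ('a \<times> bool) monoid" where
  "model_comp G = \<lparr> carrier = carrier G \<times> (UNIV :: bool set),
     monoid.mult = (\<lambda>(f1, k1) (f2, k2). (sgn_act G k2 f1 \<otimes>\<^bsub>G\<^esub> sgn_act G k1 f2, k1 \<noteq> k2)),
     monoid.one = (\<one>\<^bsub>G\<^esub>, False) \<rparr>"

end

theory Submission
  imports Defs
begin


locale sbrace =
  fixes P :: "'a monoid" and C :: "'a monoid"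
  assumes sb: "skew_brace P C"
begin

sublocale P: group P using sb unfolding skew_brace_def by blast
sublocale C: group C using sb unfolding skew_brace_def by blast

abbreviation ad (infixl "+." 65) where "ad a b \<equiv> a \<otimes>\<^bsub>P\<^esub> b"
abbreviation cm (infixl "\<bullet>" 70) where "cm a b \<equiv> a \<otimes>\<^bsub>C\<^esub> b"
abbreviation neg where "neg a \<equiv> inv\<^bsub>P\<^esub> a"
abbreviation cinv where "cinv a \<equiv> inv\<^bsub>C\<^esub> a"
abbreviation e where "e \<equiv> \<one>\<^bsub>P\<^esub>"
abbreviation A where "A \<equiv> carrier P"
abbreviation lam where "lam \<equiv> brace_lambda P C"

lemma carrC[simp]: "carrier C = carrier P"
  using sb unfolding skew_brace_def by blast

lemma law: "a \<in> A \<Longrightarrow> b \<in> A \<Longrightarrow> c \<in> A \<Longrightarrow> a \<bullet> (b +. c) = a \<bullet> b +. neg a +. a \<bullet> c"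
  using sb unfolding skew_brace_def by blast

lemma cm_closed[simp]: "a \<in> A \<Longrightarrow> b \<in> A \<Longrightarrow> a \<bullet> b \<in> A"
  using C.m_closed by simp

lemma cinv_closed[simp]: "a \<in> A \<Longrightarrow> cinv a \<in> A"
  using C.inv_closed by simp

lemma r_e: assumes a: "a \<in> A" shows "a \<bullet> e = a"
proof -
  let ?y = "a \<bullet> e"
  have y: "?y \<in> A" using a by simp
  have "?y = ?y +. neg a +. ?y" using law[of a e e] a by simp
  hence "?y +. e = ?y +. (neg a +. ?y)" using a y by (simp add: P.m_assoc)
  hence "e = neg a +. ?y" using a y by simp
  hence "a +. e = a +. (neg a +. ?y)" by simp
  thus ?thesis using a y by (simp add: P.m_assoc[symmetric])
qed

declare r_e[simp]

lemma oneC[simp]: "\<one>\<^bsub>C\<^esub> = e"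
  using r_e[of "\<one>\<^bsub>C\<^esub>"] C.l_one[of e] C.one_closed P.one_closed by simp

lemma l_e[simp]: "a \<in> A \<Longrightarrow> e \<bullet> a = a" using C.l_one[of a] by simp

lemma lam_def': "lam a b = neg a +. a \<bullet> b" by (simp add: brace_lambda_def)

lemma lam_closed[simp]: "a \<in> A \<Longrightarrow> b \<in> A \<Longrightarrow> lam a b \<in> A"
  by (simp add: lam_def')

lemma comp_eq: "a \<in> A \<Longrightarrow> b \<in> A \<Longrightarrow> a \<bullet> b = a +. lam a b"
  by (simp add: lam_def' P.m_assoc[symmetric])

lemma lam_add: "a \<in> A \<Longrightarrow> b \<in> A \<Longrightarrow> c \<in> A \<Longrightarrow> lam a (b +. c) = lam a b +. lam a c"
  by (simp add: lam_def' law P.m_assoc)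

lemma lam_e[simp]: "a \<in> A \<Longrightarrow> lam a e = e"
  by (simp add: lam_def' r_e)

lemma lam_one[simp]: "b \<in> A \<Longrightarrow> lam e b = b"
  using C.l_one[of b] by (simp add: lam_def')

lemma lam_neg: assumes "a \<in> A" "b \<in> A" shows "lam a (neg b) = neg (lam a b)"
proof -
  have "lam a (neg b) +. lam a b = e"
    using assms lam_add[of a "neg b" b] by simp
  thus ?thesis using assms P.inv_equality[of "lam a (neg b)" "lam a b"] by simp
qed

lemma lam_comp: assumes a: "a \<in> A" and b: "b \<in> A" and c: "c \<in> A"
  shows "lam (a \<bullet> b) c = lam a (lam b c)"
proof -
  have 1: "a \<bullet> (b \<bullet> c) = a \<bullet> b +. (neg a +. a \<bullet> (lam b c))"
    using assms comp_eq[of b c] law[of a b "lam b c"] by (simp add: P.m_assoc)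
  have "lam (a \<bullet> b) c = neg (a \<bullet> b) +. (a \<bullet> b) \<bullet> c" by (rule lam_def')
  also have "\<dots> = neg (a \<bullet> b) +. a \<bullet> (b \<bullet> c)" using assms by (simp add: C.m_assoc)
  also have "\<dots> = neg (a \<bullet> b) +. (a \<bullet> b +. (neg a +. a \<bullet> (lam b c)))" using 1 by simp
  also have "\<dots> = neg a +. a \<bullet> (lam b c)" using assms by (simp add: P.m_assoc[symmetric])
  also have "\<dots> = lam a (lam b c)" by (simp add: lam_def')
  finally show ?thesis .
qed

lemma lam_cancel1[simp]: "a \<in> A \<Longrightarrow> b \<in> A \<Longrightarrow> lam (cinv a) (lam a b) = b"
  using lam_comp[of "cinv a" a b] C.l_inv[of a] by simp
lemma lam_cancel2[simp]: "a \<in> A \<Longrightarrow> b \<in> A \<Longrightarrow> lam a (lam (cinv a) b) = b"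
  using lam_comp[of a "cinv a" b] C.r_inv[of a] by simp

abbreviation F where "F \<equiv> brace_Fix P C"
abbreviation K where "K \<equiv> brace_ker P C"

lemma F_iff: "f \<in> F \<longleftrightarrow> f \<in> A \<and> (\<forall>x\<in>A. lam x f = f)"
  by (simp add: brace_Fix_def)
lemma K_iff: "k \<in> K \<longleftrightarrow> k \<in> A \<and> (\<forall>b\<in>A. lam k b = b)"
  by (simp add: brace_ker_def)

lemma F_A: "f \<in> F \<Longrightarrow> f \<in> A" by (simp add: F_iff)
lemma K_A: "f \<in> K \<Longrightarrow> f \<in> A" by (simp add: K_iff)

lemma comp_F: "a \<in> A \<Longrightarrow> f \<in> F \<Longrightarrow> a \<bullet> f = a +. f"
  by (simp add: comp_eq F_iff)
lemma comp_K: "k \<in> K \<Longrightarrow> b \<in> A \<Longrightarrow> k \<bullet> b = k +. b"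
  by (simp add: comp_eq K_iff)

lemma F_one[simp]: "e \<in> F" by (simp add: F_iff)
lemma F_add: "x \<in> F \<Longrightarrow> y \<in> F \<Longrightarrow> x +. y \<in> F" by (simp add: F_iff lam_add)
lemma F_neg: "x \<in> F \<Longrightarrow> neg x \<in> F" by (simp add: F_iff lam_neg)

lemma F_sub: "subgroup F P"
  by (rule subgroup.intro) (auto simp: F_A F_add F_neg)

lemma cinv_F: assumes "f \<in> F" shows "cinv f = neg f"
proof -
  have "neg f \<bullet> f = e" using assms F_A comp_F by simp
  thus ?thesis using assms F_A C.inv_equality[of "neg f" f] by simp
qed

lemma F_subC: "subgroup F C"
  by (rule subgroup.intro) (auto simp: F_A F_add cinv_F F_neg comp_F)

end



lemma arith_aux:
  fixes d m s :: nat
  assumes "d > 0" "m > 0" "m * s = d + m" "d dvd d + m"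
  shows "m = d \<and> s = 2"
proof -
  have "d dvd m" using assms(4) by simp
  then obtain t where t: "m = d * t" by blast
  have "t > 0" using assms(2) t by simp
  have "d * (t * s) = d * (1 + t)" using assms(3) t by (simp add: algebra_simps)
  hence ts: "t * s = 1 + t" using assms(1) by (metis mult_left_cancel not_gr0)
  hence "s \<ge> 2" using \<open>t > 0\<close> by (cases s; cases "s - 1"; auto)
  have "t * (s - 1) = 1" using ts by (simp add: diff_mult_distrib2)
  hence "t = 1" "s - 1 = 1" by auto
  thus ?thesis using t \<open>s \<ge> 2\<close> by auto
qed

locale sbrace_main = sbrace +
  assumes fin: "finite (carrier P)"
    and vert: "card (Lambda_vertices P C) = 1"
    and kf: "brace_ker P C \<inter> brace_Fix P C = {\<one>\<^bsub>P\<^esub>}"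
begin

definition orb where "orb b = (\<lambda>a. lam a b) ` A"

lemma orb_F: "b \<in> F \<Longrightarrow> orb b = {b}"
  unfolding orb_def using F_iff by auto

lemma orb_fin: "finite (orb b)" unfolding orb_def using fin by simp

lemma lam_F_back: assumes "a \<in> A" "b \<in> A" "lam a b \<in> F" shows "b \<in> F"
proof -
  have "lam (cinv a) (lam a b) = lam a b" using assms F_iff by simp
  thus ?thesis using assms by simp
qed

lemma orb_nF: assumes b: "b \<in> A" "b \<notin> F" shows "card (orb b) > 1"
proof -
  obtain a where a: "a \<in> A" "lam a b \<noteq> b" using b F_iff by auto
  have "{b, lam a b} \<subseteq> orb b" unfolding orb_def using a b
    by (auto intro!: image_eqI[where x=e])
  hence "card {b, lam a b} \<le> card (orb b)" using orb_fin card_mono by blast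
  thus ?thesis using a by simp
qed

lemma vert_eq: "Lambda_vertices P C = {L \<in> orb ` A. card L > 1}"
  unfolding Lambda_vertices_def lambda_orbits_def orb_def by simp

lemma exL: "\<exists>L. Lambda_vertices P C = {L}"
  using vert by (simp add: card_1_singleton_iff)

definition L where "L = (THE L. Lambda_vertices P C = {L})"

lemma L_eq: "Lambda_vertices P C = {L}"
proof -
  have "\<exists>!L. Lambda_vertices P C = {L}" using exL by auto
  thus ?thesis unfolding L_def by (rule theI')
qed

lemma nF_orb: assumes "b \<in> A" "b \<notin> F" shows "orb b = L"
proof -
  have "orb b \<in> Lambda_vertices P C" unfolding vert_eq using assms orb_nF by blast
  thus ?thesis using L_eq by blast
qed

lemma ex_nF: "\<exists>x. x \<in> A \<and> x \<notin> F"
proof (rule ccontr)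
  assume "\<not> ?thesis"
  hence "\<And>b. b \<in> A \<Longrightarrow> orb b = {b}" using orb_F by blast
  hence "\<And>S. S \<in> orb ` A \<Longrightarrow> card S = 1" by force
  hence "Lambda_vertices P C = {}" unfolding vert_eq by fastforce
  thus False using vert by simp
qed

lemma orb_self: "c \<in> A \<Longrightarrow> c \<in> orb c"
  unfolding orb_def by (rule image_eqI[where x=e]) simp_all

lemma orb_nF_eq: assumes "b \<in> A" "b \<notin> F" shows "orb b = A - F"
proof
  show "orb b \<subseteq> A - F"
  proof
    fix c assume "c \<in> orb b"
    then obtain a where a: "a \<in> A" "c = lam a b" unfolding orb_def by blast
    hence "c \<in> A" using assms by simp
    moreover have "c \<notin> F" using lam_F_back[of a b] a assms by blast
    ultimately show "c \<in> A - F" by blast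
  qed
  show "A - F \<subseteq> orb b"
  proof
    fix c assume c: "c \<in> A - F"
    hence "c \<in> orb c" using orb_self by blast
    moreover have "orb c = orb b" using nF_orb assms c by blast
    ultimately show "c \<in> orb b" by simp
  qed
qed

definition phi where "phi a = (\<lambda>b\<in>A. lam a b)"

lemma phi_Bij: "a \<in> A \<Longrightarrow> phi a \<in> Bij A"
  unfolding phi_def Bij_def
  by (auto intro!: bij_betw_byWitness[where f'="lam (cinv a)"])

lemma action: "group_action C A phi"
proof -
  have "phi \<in> hom C (BijGroup A)"
  proof (rule homI)
    fix a assume "a \<in> carrier C" thus "phi a \<in> carrier (BijGroup A)"
      using phi_Bij by (simp add: BijGroup_def)
  next
    fix a b assume "a \<in> carrier C" "b \<in> carrier C"
    thus "phi (a \<bullet> b) = phi a \<otimes>\<^bsub>BijGroup A\<^esub> phi b"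
      using phi_Bij by (auto simp: BijGroup_def compose_def phi_def lam_comp)
  qed
  thus ?thesis unfolding group_action_def group_hom_def group_hom_axioms_def
    using C.is_group group_BijGroup by blast
qed

lemma counts: assumes x0: "x0 \<in> A" "x0 \<notin> F"
  shows "card (A - F) = card F \<and> card (stabilizer C phi x0) = 2"
proof -
  interpret ga: group_action C A phi by (rule action)
  have orbit: "orbit C phi x0 = A - F"
    using orb_nF_eq[OF x0] x0 unfolding orbit_def orb_def phi_def by auto
  have "card (A - F) * card (stabilizer C phi x0) = order C"
    using ga.orbit_stabilizer_theorem[OF x0(1)] orbit by simp
  have FA: "F \<subseteq> A" using F_A by auto
  have finF: "finite F" using FA fin finite_subset by blast
  have cA: "card A = card F + card (A - F)"
    using card_Diff_subset[OF finF FA] card_mono[OF fin FA] by simp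
  have 1: "card (A - F) * card (stabilizer C phi x0) = card F + card (A - F)"
    using \<open>card (A - F) * card (stabilizer C phi x0) = order C\<close> cA unfolding order_def by simp
  have "card (rcosets\<^bsub>P\<^esub> F) * card F = card A"
    using P.lagrange[OF F_sub] unfolding order_def .
  hence 2: "card F dvd card F + card (A - F)" using cA by (metis dvd_triv_right)
  have "card F > 0" using finF F_one card_gt_0_iff by blast
  moreover have "card (A - F) > 0" using x0 fin by (auto simp: card_gt_0_iff)
  ultimately show ?thesis using arith_aux 1 2 by blast
qed

lemma coset: assumes y: "y \<in> A" "y \<notin> F" shows "A - F = (\<lambda>f. y +. f) ` F"
proof -
  have eq: "card (A - F) = card F" using counts[OF y] by blast
  have sub: "(\<lambda>f. y +. f) ` F \<subseteq> A - F"
  proof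
    fix z assume "z \<in> (\<lambda>f. y +. f) ` F"
    then obtain f where f: "f \<in> F" "z = y +. f" by auto
    have "z \<in> A" using f y F_A by simp
    moreover have "z \<notin> F"
    proof
      assume "z \<in> F"
      hence "z +. neg f \<in> F" using f F_add F_neg by simp
      thus False using f y F_A by (simp add: P.m_assoc)
    qed
    ultimately show "z \<in> A - F" by simp
  qed
  have inj: "inj_on (\<lambda>f. y +. f) F" using y F_A by (auto simp: inj_on_def)
  have "card ((\<lambda>f. y +. f) ` F) = card (A - F)" using eq card_image[OF inj] by simp
  thus ?thesis using card_subset_eq[OF finite_Diff[OF fin] sub] by simp
qed

end



context sbrace_main
begin

lemma stab_K: assumes y: "y \<in> A" "y \<notin> F" and a: "a \<in> A" "lam a y = y" shows "a \<in> K"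
  unfolding K_iff
proof (intro conjI ballI)
  show "a \<in> A" by fact
  fix b assume b: "b \<in> A"
  show "lam a b = b"
  proof (cases "b \<in> F")
    case True thus ?thesis using a F_iff by blast
  next
    case False
    hence "b \<in> (\<lambda>f. y +. f) ` F" using coset[OF y] b by blast
    then obtain f where f: "f \<in> F" "b = y +. f" by blast
    have "lam a b = lam a y +. lam a f" using f y a F_A lam_add by simp
    also have "\<dots> = b" using f a F_iff by simp
    finally show ?thesis .
  qed
qed

lemma K_stab: "k \<in> K \<Longrightarrow> y \<in> A \<Longrightarrow> lam k y = y" by (simp add: K_iff)

lemma K_one: "e \<in> K" by (simp add: K_iff)

lemma K_comp: "k1 \<in> K \<Longrightarrow> k2 \<in> K \<Longrightarrow> k1 \<bullet> k2 \<in> K"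
  by (simp add: K_iff lam_comp)

lemma cardK: "card K = 2"
proof -
  obtain x0 where x0: "x0 \<in> A" "x0 \<notin> F" using ex_nF by blast
  have "stabilizer C phi x0 = K"
    using stab_K[OF x0] K_stab K_A x0 unfolding stabilizer_def phi_def by auto
  thus ?thesis using counts[OF x0] by simp
qed

definition xk where "xk = (SOME k. k \<in> K \<and> k \<noteq> e)"

lemma xk_prop: "xk \<in> K \<and> xk \<noteq> e"
proof -
  have "\<exists>k. k \<in> K \<and> k \<noteq> e"
  proof (rule ccontr)
    assume "\<not> ?thesis"
    hence "K \<subseteq> {e}" by blast
    hence "card K \<le> card {e}" by (intro card_mono) auto
    thus False using cardK by simp
  qed
  thus ?thesis unfolding xk_def by (rule someI_ex)
qed

lemma xK: "xk \<in> K" and xne: "xk \<noteq> e" using xk_prop by auto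
lemma xA: "xk \<in> A" using xK K_A by blast
lemma xnF: "xk \<notin> F" using xK xne kf by blast

lemma K_eq: "K = {e, xk}"
proof -
  have sub: "{e, xk} \<subseteq> K" using xK K_one by blast
  have "finite K" using fin K_A by (meson finite_subset subsetI)
  moreover have "card {e, xk} = card K" using cardK xne by simp
  ultimately show ?thesis using sub card_subset_eq by blast
qed

lemma xx: "xk +. xk = e"
proof -
  have "xk \<bullet> xk \<in> K" using xK K_comp by blast
  moreover have "xk \<bullet> xk \<noteq> xk"
  proof
    assume "xk \<bullet> xk = xk"
    hence "xk \<bullet> xk = xk \<bullet> \<one>\<^bsub>C\<^esub>" using xA by simp
    hence "xk = \<one>\<^bsub>C\<^esub>" using xA C.l_cancel[of xk xk "\<one>\<^bsub>C\<^esub>"] by simp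
    thus False using xne by simp
  qed
  ultimately have "xk \<bullet> xk = e" using K_eq by blast
  thus ?thesis using comp_K[OF xK xA] by simp
qed

lemma negx: "neg xk = xk"
  using P.inv_equality[of xk xk] xx xA by simp

lemma conjF: assumes f: "f \<in> F" shows "lam f xk = neg f +. xk +. f"
proof -
  have fA: "f \<in> A" using f F_A by blast
  let ?c = "f \<bullet> xk \<bullet> cinv f"
  have cA: "?c \<in> A" using fA xA by simp
  have "?c \<in> K" unfolding K_iff
  proof (intro conjI ballI)
    show "?c \<in> A" by fact
    fix b assume b: "b \<in> A"
    show "lam ?c b = b" using b fA xA K_stab[OF xK] by (simp add: lam_comp)
  qed
  moreover have "?c \<noteq> e"
  proof
    assume "?c = e"
    hence "?c \<bullet> f = f" using fA by simp
    hence "f \<bullet> xk = f" using fA xA by (simp add: C.m_assoc)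
    hence "f \<bullet> xk = f \<bullet> \<one>\<^bsub>C\<^esub>" using fA by simp
    hence "xk = e" using fA xA C.l_cancel[of f xk "\<one>\<^bsub>C\<^esub>"] by simp
    thus False using xne by simp
  qed
  ultimately have "?c = xk" using K_eq by blast
  hence "?c \<bullet> f = xk \<bullet> f" by simp
  hence "f \<bullet> xk = xk \<bullet> f" using fA xA by (simp add: C.m_assoc)
  hence "f +. lam f xk = xk +. f" using comp_eq[OF fA xA] comp_K[OF xK fA] by simp
  hence "neg f +. (f +. lam f xk) = neg f +. (xk +. f)" by simp
  thus ?thesis using fA xA by (simp add: P.m_assoc[symmetric])
qed

end



context sbrace_main
begin

definition psi where "psi f = xk +. lam f xk"

lemma FA': "F \<subseteq> A" using F_A by auto
lemma finF: "finite F" using FA' fin finite_subset by blast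

lemma lam_psi: "f \<in> A \<Longrightarrow> lam f xk = xk +. psi f"
  unfolding psi_def using xA xx by (simp add: P.m_assoc[symmetric])

lemma psi_F: assumes f: "f \<in> F" shows "psi f \<in> F"
proof -
  have fA: "f \<in> A" using f F_A by blast
  have "lam f xk \<in> A - F" using lam_F_back[OF fA xA] xnF fA xA by auto
  then obtain g where g: "g \<in> F" "lam f xk = xk +. g" using coset[OF xA xnF] by blast
  have "psi f = xk +. (xk +. g)" unfolding psi_def using g by simp
  also have "\<dots> = g" using xx xA g F_A by (simp add: P.m_assoc[symmetric])
  finally show ?thesis using g by simp
qed

lemma psi_inv: assumes f: "f \<in> F" shows "xk +. psi f +. xk = neg (psi f)"
proof -
  have fA: "f \<in> A" using f F_A by blast
  have pA: "psi f \<in> A" using psi_F[OF f] F_A by blast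
  have "lam f xk +. lam f xk = e" using lam_add[OF fA xA xA, symmetric] xx fA by simp
  hence "(xk +. psi f) +. (xk +. psi f) = e" using lam_psi[OF fA] by simp
  hence "(xk +. psi f +. xk) +. psi f = e" using xA pA by (simp add: P.m_assoc)
  thus ?thesis using P.inv_equality[of "xk +. psi f +. xk" "psi f"] xA pA by simp
qed

lemma psi_inj: "inj_on psi F"
proof (rule inj_onI)
  fix f1 f2 assume f1: "f1 \<in> F" and f2: "f2 \<in> F" and eq: "psi f1 = psi f2"
  have A1: "f1 \<in> A" and A2: "f2 \<in> A" using f1 f2 F_A by auto
  have l: "lam f1 xk = lam f2 xk" using eq lam_psi A1 A2 by simp
  let ?c = "cinv f2 \<bullet> f1"
  have cA: "?c \<in> A" using A1 A2 by simp
  have "lam ?c xk = lam (cinv f2) (lam f1 xk)" using A1 A2 xA lam_comp by simp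
  also have "\<dots> = xk" using l A2 xA by simp
  finally have "lam ?c xk = xk" .
  hence "?c \<in> K" using stab_K[OF xA xnF cA] by blast
  moreover have "?c \<in> F"
  proof -
    have "cinv f2 \<in> F" using f2 by (simp add: cinv_F F_neg)
    thus ?thesis using comp_F[OF _ f1] F_add f1 F_A by simp
  qed
  ultimately have "?c = e" using kf by blast
  thus "f1 = f2" using C.inv_solve_left'[of e f2 f1] A1 A2 by simp
qed

lemma psi_surj: "psi ` F = F"
proof -
  have sub: "psi ` F \<subseteq> F" using psi_F by blast
  have "card (psi ` F) = card F" using card_image[OF psi_inj] .
  thus ?thesis using card_subset_eq[OF finF sub] by simp
qed

lemma inversion: assumes g: "g \<in> F" shows "xk +. g +. xk = neg g"
proof -
  obtain f where "f \<in> F" "g = psi f" using g psi_surj by blast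
  thus ?thesis using psi_inv by simp
qed

lemma neg_add_F: assumes u: "u \<in> F" and v: "v \<in> F" shows "neg (u +. v) = neg u +. neg v"
proof -
  have uA: "u \<in> A" and vA: "v \<in> A" using u v F_A by auto
  have "(xk +. u +. xk) +. (xk +. v +. xk) = xk +. u +. (xk +. xk) +. v +. xk"
    using uA vA xA by (simp add: P.m_assoc)
  also have "\<dots> = xk +. (u +. v) +. xk" using uA vA xA xx by (simp add: P.m_assoc)
  finally show ?thesis using inversion u v F_add by metis
qed

lemma commF: assumes g: "g \<in> F" and h: "h \<in> F" shows "g +. h = h +. g"
proof -
  have gA: "g \<in> A" and hA: "h \<in> A" using g h F_A by auto
  have "neg (neg g +. neg h) = neg (neg g) +. neg (neg h)" using neg_add_F g h F_neg by blast
  moreover have "neg (neg g +. neg h) = neg (neg h) +. neg (neg g)"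
    using gA hA by (simp add: P.inv_mult_group)
  ultimately show ?thesis using gA hA by simp
qed

lemma psi_dbl: assumes f: "f \<in> F" shows "psi f = f +. f"
proof -
  have fA: "f \<in> A" using f F_A by auto
  have "psi f = (xk +. neg f +. xk) +. f" unfolding psi_def using conjF[OF f] fA xA
    by (simp add: P.m_assoc)
  also have "\<dots> = f +. f" using inversion[OF F_neg[OF f]] fA by simp
  finally show ?thesis .
qed

lemma dbl_inj: "f \<in> F \<Longrightarrow> g \<in> F \<Longrightarrow> f +. f = g +. g \<Longrightarrow> f = g"
  using psi_inj psi_dbl by (metis inj_onD)

abbreviation Fs where "Fs \<equiv> P\<lparr>carrier := F\<rparr>"

lemma Fs_group: "group Fs" using subgroup.subgroup_is_group[OF F_sub P.is_group] .

lemma oddF: "odd (card F)"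
proof (rule ccontr)
  assume "\<not> odd (card F)"
  then obtain m where m: "card F = 2 * m" by blast
  have "order Fs = 2 ^ 1 * m" using m by (simp add: order_def)
  then obtain H where H: "subgroup H Fs" "card H = 2 ^ 1"
    using sylow_thm[of 2 Fs 1 m] Fs_group finF by auto
  have HF: "H \<subseteq> F" using subgroup.subset[OF H(1)] by simp
  have eH: "e \<in> H" using subgroup.one_closed[OF H(1)] by simp
  have "\<exists>h. h \<in> H \<and> h \<noteq> e"
  proof (rule ccontr)
    assume "\<not> ?thesis"
    hence "H \<subseteq> {e}" by blast
    hence "card H \<le> card {e}" by (intro card_mono) auto
    thus False using H(2) by simp
  qed
  then obtain h where h: "h \<in> H" "h \<noteq> e" by blast
  have hF: "h \<in> F" using h HF by blast
  have hA: "h \<in> A" using hF F_A by blast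
  have hh: "h +. h \<in> H" using subgroup.m_closed[OF H(1) h(1) h(1)] by simp
  have finH: "finite H" using HF finF finite_subset by blast
  have "H = {e, h}"
    using card_subset_eq[OF finH, of "{e, h}"] eH h H(2) by simp
  moreover have "h +. h \<noteq> h"
  proof
    assume "h +. h = h"
    hence "h +. h = h +. e" using hA by simp
    thus False using h(2) hA by simp
  qed
  ultimately have "h +. h = e +. e" using hh by simp
  thus False using dbl_inj[OF hF F_one] h(2) by simp
qed

end



context sbrace_main
begin

lemma negneg: "a \<in> A \<Longrightarrow> neg a +. (a +. c) = c \<and> a +. (neg a +. c) = c" if "c \<in> A"
  using that by (simp add: P.m_assoc[symmetric])

lemma xcomm: assumes f: "f \<in> F" shows "xk +. f = neg f +. xk"
proof -
  have fA: "f \<in> A" using f F_A by blast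
  have "xk +. f = xk +. f +. xk +. xk" using xx fA xA by (simp add: P.m_assoc)
  also have "\<dots> = neg f +. xk" using inversion[OF f] by simp
  finally show ?thesis .
qed

abbreviation Cs where "Cs \<equiv> C\<lparr>carrier := F\<rparr>"

lemma invFs: "f \<in> F \<Longrightarrow> inv\<^bsub>Fs\<^esub> f = neg f"
  using P.m_inv_consistent[OF F_sub] by simp

lemma Fs_comm: "comm_group Fs"
  by (rule group.group_comm_groupI[OF Fs_group]) (simp add: commF)

lemma Fs_triv: "trivial_skew_brace Fs Cs"
proof -
  have gC: "group Cs" using subgroup.subgroup_is_group[OF F_subC C.is_group] .
  have law': "\<forall>a\<in>carrier Cs. \<forall>b\<in>carrier Cs. \<forall>c\<in>carrier Cs.
        a \<otimes>\<^bsub>Cs\<^esub> (b \<otimes>\<^bsub>Fs\<^esub> c)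
          = (a \<otimes>\<^bsub>Cs\<^esub> b) \<otimes>\<^bsub>Fs\<^esub> inv\<^bsub>Fs\<^esub> a \<otimes>\<^bsub>Fs\<^esub> (a \<otimes>\<^bsub>Cs\<^esub> c)"
  proof (intro ballI)
    fix a b c assume "a \<in> carrier Cs" "b \<in> carrier Cs" "c \<in> carrier Cs"
    hence F3: "a \<in> F" "b \<in> F" "c \<in> F" by auto
    hence A3: "a \<in> A" "b \<in> A" "c \<in> A" using F_A by auto
    have "a \<otimes>\<^bsub>Cs\<^esub> (b \<otimes>\<^bsub>Fs\<^esub> c) = a +. (b +. c)"
      using F3 A3 comp_F F_add by simp
    moreover have "(a \<otimes>\<^bsub>Cs\<^esub> b) \<otimes>\<^bsub>Fs\<^esub> inv\<^bsub>Fs\<^esub> a \<otimes>\<^bsub>Fs\<^esub> (a \<otimes>\<^bsub>Cs\<^esub> c)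
        = a +. (b +. (neg a +. (a +. c)))"
      using F3 A3 comp_F invFs by (simp add: P.m_assoc)
    ultimately show "a \<otimes>\<^bsub>Cs\<^esub> (b \<otimes>\<^bsub>Fs\<^esub> c)
          = (a \<otimes>\<^bsub>Cs\<^esub> b) \<otimes>\<^bsub>Fs\<^esub> inv\<^bsub>Fs\<^esub> a \<otimes>\<^bsub>Fs\<^esub> (a \<otimes>\<^bsub>Cs\<^esub> c)"
      using negneg A3 by simp
  qed
  have tr: "\<forall>a\<in>carrier Fs. \<forall>b\<in>carrier Fs. a \<otimes>\<^bsub>Fs\<^esub> b = a \<otimes>\<^bsub>Cs\<^esub> b"
    using comp_F F_A by simp
  show ?thesis unfolding trivial_skew_brace_def skew_brace_def
    using Fs_group gC law' tr by simp
qed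

lemma compFT: assumes f1: "f1 \<in> F" and f2: "f2 \<in> F"
  shows "f1 \<bullet> (f2 +. xk) = neg f1 +. f2 +. xk"
proof -
  have A1: "f1 \<in> A" and A2: "f2 \<in> A" using f1 f2 F_A by auto
  have "f1 \<bullet> (f2 +. xk) = f1 +. (f2 +. lam f1 xk)"
    using comp_eq A1 A2 xA lam_add f2 F_iff by simp
  also have "\<dots> = f1 +. f2 +. neg f1 +. (xk +. f1)"
    using conjF[OF f1] A1 A2 xA by (simp add: P.m_assoc)
  also have "\<dots> = f2 +. f1 +. neg f1 +. neg f1 +. xk"
    using xcomm[OF f1] commF[OF f1 f2] A1 A2 xA by (simp add: P.m_assoc)
  also have "\<dots> = f2 +. neg f1 +. xk"
    using A1 A2 xA by (simp add: P.m_assoc negneg)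
  also have "\<dots> = neg f1 +. f2 +. xk"
    using commF[OF f2 F_neg[OF f1]] by simp
  finally show ?thesis .
qed

definition g0 where "g0 p = (if snd p then fst p +. xk else fst p)"
definition h0 where "h0 a = (if a \<in> F then (a, False) else (a +. xk, True))"

lemma madd: "f1 \<in> F \<Longrightarrow> f2 \<in> F \<Longrightarrow>
  (f1, k1) \<otimes>\<^bsub>model_add Fs\<^esub> (f2, k2) = (f1 +. (if k1 then neg f2 else f2), k1 \<noteq> k2)"
  by (simp add: model_add_def sgn_act_def invFs)

lemma mcomp: "f1 \<in> F \<Longrightarrow> f2 \<in> F \<Longrightarrow>
  (f1, k1) \<otimes>\<^bsub>model_comp Fs\<^esub> (f2, k2) =
     ((if k2 then neg f1 else f1) +. (if k1 then neg f2 else f2), k1 \<noteq> k2)"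
  by (simp add: model_comp_def sgn_act_def invFs)

lemma carr_add[simp]: "carrier (model_add Fs) = F \<times> UNIV" by (simp add: model_add_def)
lemma carr_comp[simp]: "carrier (model_comp Fs) = F \<times> UNIV" by (simp add: model_comp_def)

lemma g0_add: assumes f1: "f1 \<in> F" and f2: "f2 \<in> F"
  shows "g0 ((f1, k1) \<otimes>\<^bsub>model_add Fs\<^esub> (f2, k2)) = g0 (f1, k1) +. g0 (f2, k2)"
proof -
  have A1: "f1 \<in> A" and A2: "f2 \<in> A" using f1 f2 F_A by auto
  show ?thesis
  proof (cases k1; cases k2)
    assume "k1" "k2"
    have "(f1 +. xk) +. (f2 +. xk) = f1 +. (xk +. f2 +. xk)" using A1 A2 xA by (simp add: P.m_assoc)
    thus ?thesis using \<open>k1\<close> \<open>k2\<close> inversion[OF f2] madd[OF f1 f2] by (simp add: g0_def)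
  next
    assume "k1" "\<not> k2"
    have "(f1 +. xk) +. f2 = f1 +. (neg f2 +. xk)" using A1 A2 xA xcomm[OF f2] by (simp add: P.m_assoc)
    thus ?thesis using \<open>k1\<close> \<open>\<not> k2\<close> madd[OF f1 f2] A1 A2 xA by (simp add: g0_def P.m_assoc)
  next
    assume "\<not> k1" "k2"
    thus ?thesis using madd[OF f1 f2] A1 A2 xA by (simp add: g0_def P.m_assoc)
  next
    assume "\<not> k1" "\<not> k2"
    thus ?thesis using madd[OF f1 f2] by (simp add: g0_def)
  qed
qed

lemma g0_comp: assumes f1: "f1 \<in> F" and f2: "f2 \<in> F"
  shows "g0 ((f1, k1) \<otimes>\<^bsub>model_comp Fs\<^esub> (f2, k2)) = g0 (f1, k1) \<bullet> g0 (f2, k2)"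
proof -
  have A1: "f1 \<in> A" and A2: "f2 \<in> A" using f1 f2 F_A by auto
  show ?thesis
  proof (cases k1; cases k2)
    assume "k1" "k2"
    have e1: "f1 +. xk = xk \<bullet> neg f1" using comp_K[OF xK] xcomm[OF F_neg[OF f1]] A1 by simp
    have "(f1 +. xk) \<bullet> (f2 +. xk) = xk \<bullet> (neg f1 \<bullet> (f2 +. xk))"
      using e1 A1 A2 xA by (simp add: C.m_assoc)
    also have "\<dots> = xk +. (f1 +. f2 +. xk)"
      using compFT[OF F_neg[OF f1] f2] comp_K[OF xK] A1 A2 xA by simp
    also have "\<dots> = xk +. (f1 +. f2) +. xk" using A1 A2 xA by (simp add: P.m_assoc)
    also have "\<dots> = neg f1 +. neg f2" using inversion[OF F_add[OF f1 f2]] neg_add_F[OF f1 f2] by simp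
    finally show ?thesis using \<open>k1\<close> \<open>k2\<close> mcomp[OF f1 f2] by (simp add: g0_def)
  next
    assume "k1" "\<not> k2"
    have "(f1 +. xk) \<bullet> f2 = f1 +. neg f2 +. xk"
      using comp_F[OF _ f2] A1 A2 xA xcomm[OF f2] by (simp add: P.m_assoc)
    thus ?thesis using \<open>k1\<close> \<open>\<not> k2\<close> mcomp[OF f1 f2] by (simp add: g0_def)
  next
    assume "\<not> k1" "k2"
    thus ?thesis using mcomp[OF f1 f2] compFT[OF f1 f2] by (simp add: g0_def)
  next
    assume "\<not> k1" "\<not> k2"
    thus ?thesis using mcomp[OF f1 f2] comp_F[OF A1 f2] by (simp add: g0_def)
  qed
qed

lemma g0_A: "p \<in> F \<times> UNIV \<Longrightarrow> g0 p \<in> A"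
  using F_A xA by (auto simp: g0_def)

lemma h0_g0: assumes p: "p \<in> F \<times> UNIV" shows "h0 (g0 p) = p"
proof -
  obtain f k where pk: "p = (f, k)" "f \<in> F" using p by auto
  have fA: "f \<in> A" using pk F_A by auto
  show ?thesis
  proof (cases k)
    case True
    have "f +. xk \<notin> F"
    proof
      assume "f +. xk \<in> F"
      hence "neg f +. (f +. xk) \<in> F" using F_add F_neg pk by blast
      thus False using negneg[OF xA fA] xnF by simp
    qed
    moreover have "f +. xk +. xk = f" using fA xA xx by (simp add: P.m_assoc)
    ultimately show ?thesis using True pk by (simp add: g0_def h0_def)
  next
    case False thus ?thesis using pk by (simp add: g0_def h0_def)
  qed
qed

lemma h0_in: assumes a: "a \<in> A" shows "h0 a \<in> F \<times> UNIV \<and> g0 (h0 a) = a"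
proof (cases "a \<in> F")
  case True thus ?thesis by (simp add: g0_def h0_def)
next
  case False
  then obtain g where g: "g \<in> F" "a = xk +. g" using coset[OF xA xnF] a by blast
  have "a +. xk = neg g" using g inversion by simp
  hence "a +. xk \<in> F" using g F_neg by simp
  moreover have "a +. xk +. xk = a" using a xA xx by (simp add: P.m_assoc)
  ultimately show ?thesis using False by (simp add: g0_def h0_def)
qed

lemma iso: "skew_brace_iso P C (model_add Fs) (model_comp Fs) h0"
  unfolding skew_brace_iso_def
proof (intro conjI)
  show "bij_betw h0 A (carrier (model_add Fs))"
  proof (rule bij_betw_byWitness[where f'=g0])
    show "\<forall>a\<in>A. g0 (h0 a) = a" using h0_in by blast
    show "\<forall>p\<in>carrier (model_add Fs). h0 (g0 p) = p" using h0_g0 by simp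
    show "h0 ` A \<subseteq> carrier (model_add Fs)" using h0_in by (simp add: image_subset_iff)
    show "g0 ` carrier (model_add Fs) \<subseteq> A" using g0_A by (simp add: image_subset_iff)
  qed
  show "h0 \<in> hom P (model_add Fs)"
  proof (rule homI)
    fix a assume "a \<in> A" thus "h0 a \<in> carrier (model_add Fs)" using h0_in by simp
  next
    fix a b assume a: "a \<in> A" and b: "b \<in> A"
    obtain f1 k1 where p: "h0 a = (f1, k1)" "f1 \<in> F" using h0_in[OF a] by auto
    obtain f2 k2 where q: "h0 b = (f2, k2)" "f2 \<in> F" using h0_in[OF b] by auto
    have "a +. b = g0 (f1, k1) +. g0 (f2, k2)" using h0_in a b p q by metis
    also have "\<dots> = g0 ((f1, k1) \<otimes>\<^bsub>model_add Fs\<^esub> (f2, k2))" using g0_add p q by simp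
    finally have "h0 (a +. b) = (f1, k1) \<otimes>\<^bsub>model_add Fs\<^esub> (f2, k2)"
      using h0_g0 madd[OF p(2) q(2)] F_add F_neg p q by simp
    thus "h0 (a +. b) = h0 a \<otimes>\<^bsub>model_add Fs\<^esub> h0 b" using p q by simp
  qed
  show "h0 \<in> hom C (model_comp Fs)"
  proof (rule homI)
    fix a assume "a \<in> carrier C" thus "h0 a \<in> carrier (model_comp Fs)" using h0_in by simp
  next
    fix a b assume a: "a \<in> carrier C" and b: "b \<in> carrier C"
    hence a: "a \<in> A" and b: "b \<in> A" by auto
    obtain f1 k1 where p: "h0 a = (f1, k1)" "f1 \<in> F" using h0_in[OF a] by auto
    obtain f2 k2 where q: "h0 b = (f2, k2)" "f2 \<in> F" using h0_in[OF b] by auto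
    have "a \<bullet> b = g0 (f1, k1) \<bullet> g0 (f2, k2)" using h0_in a b p q by metis
    also have "\<dots> = g0 ((f1, k1) \<otimes>\<^bsub>model_comp Fs\<^esub> (f2, k2))" using g0_comp p q by simp
    finally have "h0 (a \<bullet> b) = (f1, k1) \<otimes>\<^bsub>model_comp Fs\<^esub> (f2, k2)"
      using h0_g0 mcomp[OF p(2) q(2)] F_add F_neg p q by simp
    thus "h0 (a \<bullet> b) = h0 a \<otimes>\<^bsub>model_comp Fs\<^esub> h0 b" using p q by simp
  qed
qed

lemma forward:
  "comm_group Fs \<and> odd (card F) \<and> trivial_skew_brace Fs Cs \<and>
   (\<exists>h. skew_brace_iso P C (model_add Fs) (model_comp Fs) h)"
  using Fs_comm oddF Fs_triv iso by blast

end



locale cmodel = comm_group +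
  assumes finG: "finite (carrier G)" and oddG: "odd (card (carrier G))"
    and bigG: "card (carrier G) > 1"
begin

lemma cc_0_0_1: assumes "x \<in> carrier G" and "z \<in> carrier G" shows "x \<otimes> (inv x \<otimes> (z)) = z"
  by (simp add: assms m_assoc[symmetric])
lemma cc_0_0_0: assumes "x \<in> carrier G" and "z \<in> carrier G" shows "inv x \<otimes> (x \<otimes> (z)) = z"
  by (simp add: assms m_assoc[symmetric])
lemma cc_1_0_1: assumes "x \<in> carrier G" and "y1 \<in> carrier G" and "z \<in> carrier G" shows "x \<otimes> (y1 \<otimes> (inv x \<otimes> (z))) = y1 \<otimes> (z)"
  by (subst m_lcomm) (simp_all add: assms cc_0_0_1)
lemma cc_1_0_0: assumes "x \<in> carrier G" and "y1 \<in> carrier G" and "z \<in> carrier G" shows "inv x \<otimes> (y1 \<otimes> (x \<otimes> (z))) = y1 \<otimes> (z)"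
  by (subst m_lcomm) (simp_all add: assms cc_0_0_0)
lemma cc_1_1_1: assumes "x \<in> carrier G" and "y1 \<in> carrier G" shows "x \<otimes> (y1 \<otimes> (inv x)) = y1"
  by (subst m_lcomm) (simp_all add: assms)
lemma cc_1_1_0: assumes "x \<in> carrier G" and "y1 \<in> carrier G" shows "inv x \<otimes> (y1 \<otimes> (x)) = y1"
  by (subst m_lcomm) (simp_all add: assms)
lemma cc_2_0_1: assumes "x \<in> carrier G" and "y1 \<in> carrier G" and "y2 \<in> carrier G" and "z \<in> carrier G" shows "x \<otimes> (y1 \<otimes> (y2 \<otimes> (inv x \<otimes> (z)))) = y1 \<otimes> (y2 \<otimes> (z))"
  by (subst m_lcomm) (simp_all add: assms cc_1_0_1)
lemma cc_2_0_0: assumes "x \<in> carrier G" and "y1 \<in> carrier G" and "y2 \<in> carrier G" and "z \<in> carrier G" shows "inv x \<otimes> (y1 \<otimes> (y2 \<otimes> (x \<otimes> (z)))) = y1 \<otimes> (y2 \<otimes> (z))"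
  by (subst m_lcomm) (simp_all add: assms cc_1_0_0)
lemma cc_2_1_1: assumes "x \<in> carrier G" and "y1 \<in> carrier G" and "y2 \<in> carrier G" shows "x \<otimes> (y1 \<otimes> (y2 \<otimes> (inv x))) = y1 \<otimes> (y2)"
  by (subst m_lcomm) (simp_all add: assms cc_1_1_1)
lemma cc_2_1_0: assumes "x \<in> carrier G" and "y1 \<in> carrier G" and "y2 \<in> carrier G" shows "inv x \<otimes> (y1 \<otimes> (y2 \<otimes> (x))) = y1 \<otimes> (y2)"
  by (subst m_lcomm) (simp_all add: assms cc_1_1_0)
lemma cc_3_0_1: assumes "x \<in> carrier G" and "y1 \<in> carrier G" and "y2 \<in> carrier G" and "y3 \<in> carrier G" and "z \<in> carrier G" shows "x \<otimes> (y1 \<otimes> (y2 \<otimes> (y3 \<otimes> (inv x \<otimes> (z))))) = y1 \<otimes> (y2 \<otimes> (y3 \<otimes> (z)))"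
  by (subst m_lcomm) (simp_all add: assms cc_2_0_1)
lemma cc_3_0_0: assumes "x \<in> carrier G" and "y1 \<in> carrier G" and "y2 \<in> carrier G" and "y3 \<in> carrier G" and "z \<in> carrier G" shows "inv x \<otimes> (y1 \<otimes> (y2 \<otimes> (y3 \<otimes> (x \<otimes> (z))))) = y1 \<otimes> (y2 \<otimes> (y3 \<otimes> (z)))"
  by (subst m_lcomm) (simp_all add: assms cc_2_0_0)
lemma cc_3_1_1: assumes "x \<in> carrier G" and "y1 \<in> carrier G" and "y2 \<in> carrier G" and "y3 \<in> carrier G" shows "x \<otimes> (y1 \<otimes> (y2 \<otimes> (y3 \<otimes> (inv x)))) = y1 \<otimes> (y2 \<otimes> (y3))"
  by (subst m_lcomm) (simp_all add: assms cc_2_1_1)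
lemma cc_3_1_0: assumes "x \<in> carrier G" and "y1 \<in> carrier G" and "y2 \<in> carrier G" and "y3 \<in> carrier G" shows "inv x \<otimes> (y1 \<otimes> (y2 \<otimes> (y3 \<otimes> (x)))) = y1 \<otimes> (y2 \<otimes> (y3))"
  by (subst m_lcomm) (simp_all add: assms cc_2_1_0)
lemma cc_4_0_1: assumes "x \<in> carrier G" and "y1 \<in> carrier G" and "y2 \<in> carrier G" and "y3 \<in> carrier G" and "y4 \<in> carrier G" and "z \<in> carrier G" shows "x \<otimes> (y1 \<otimes> (y2 \<otimes> (y3 \<otimes> (y4 \<otimes> (inv x \<otimes> (z)))))) = y1 \<otimes> (y2 \<otimes> (y3 \<otimes> (y4 \<otimes> (z))))"
  by (subst m_lcomm) (simp_all add: assms cc_3_0_1)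
lemma cc_4_0_0: assumes "x \<in> carrier G" and "y1 \<in> carrier G" and "y2 \<in> carrier G" and "y3 \<in> carrier G" and "y4 \<in> carrier G" and "z \<in> carrier G" shows "inv x \<otimes> (y1 \<otimes> (y2 \<otimes> (y3 \<otimes> (y4 \<otimes> (x \<otimes> (z)))))) = y1 \<otimes> (y2 \<otimes> (y3 \<otimes> (y4 \<otimes> (z))))"
  by (subst m_lcomm) (simp_all add: assms cc_3_0_0)
lemma cc_4_1_1: assumes "x \<in> carrier G" and "y1 \<in> carrier G" and "y2 \<in> carrier G" and "y3 \<in> carrier G" and "y4 \<in> carrier G" shows "x \<otimes> (y1 \<otimes> (y2 \<otimes> (y3 \<otimes> (y4 \<otimes> (inv x))))) = y1 \<otimes> (y2 \<otimes> (y3 \<otimes> (y4)))"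
  by (subst m_lcomm) (simp_all add: assms cc_3_1_1)
lemma cc_4_1_0: assumes "x \<in> carrier G" and "y1 \<in> carrier G" and "y2 \<in> carrier G" and "y3 \<in> carrier G" and "y4 \<in> carrier G" shows "inv x \<otimes> (y1 \<otimes> (y2 \<otimes> (y3 \<otimes> (y4 \<otimes> (x))))) = y1 \<otimes> (y2 \<otimes> (y3 \<otimes> (y4)))"
  by (subst m_lcomm) (simp_all add: assms cc_3_1_0)

lemmas cc = cc_0_0_1 cc_0_0_0 cc_1_0_1 cc_1_0_0 cc_1_1_1 cc_1_1_0 cc_2_0_1 cc_2_0_0 cc_2_1_1 cc_2_1_0 cc_3_0_1 cc_3_0_0 cc_3_1_1 cc_3_1_0 cc_4_0_1 cc_4_0_0 cc_4_1_1 cc_4_1_0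

lemma dbl_one: assumes x: "x \<in> carrier G" and xx: "x \<otimes> x = \<one>" shows "x = \<one>"
proof -
  have "x [^] (2::nat) = \<one>" using xx x by (simp add: numeral_2_eq_2)
  hence d2: "ord x dvd 2" using pow_eq_id[OF x] by simp
  have "ord x dvd card (carrier G)" using ord_dvd_group_order[OF x] by (simp add: order_def)
  have "ord x \<noteq> 2" using oddG \<open>ord x dvd card (carrier G)\<close> by auto
  moreover have "ord x \<le> 2" using dvd_imp_le[OF d2] by simp
  moreover have "ord x \<noteq> 0"
  proof
    assume "ord x = 0" with d2 show False by simp
  qed
  ultimately have "ord x = 1" by arith
  thus ?thesis using ord_eq_1[OF x] by simp
qed

lemma dbl_inj: assumes x: "x \<in> carrier G" and y: "y \<in> carrier G" and eq: "x \<otimes> x = y \<otimes> y"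
  shows "x = y"
proof -
  have "(x \<otimes> inv y) \<otimes> (x \<otimes> inv y) = (x \<otimes> x) \<otimes> inv (y \<otimes> y)"
    using x y by (simp add: m_ac inv_mult cc)
  also have "\<dots> = \<one>" using eq y by simp
  finally have "x \<otimes> inv y = \<one>" using dbl_one[of "x \<otimes> inv y"] x y by simp
  thus ?thesis using inv_solve_right[of \<one> x y] x y by simp
qed

lemma dbl_surj: assumes z: "z \<in> carrier G" shows "\<exists>x\<in>carrier G. x \<otimes> x = z"
proof -
  have inj: "inj_on (\<lambda>x. x \<otimes> x) (carrier G)" unfolding inj_on_def using dbl_inj by blast
  have sub: "(\<lambda>x. x \<otimes> x) ` carrier G \<subseteq> carrier G" by auto
  have "(\<lambda>x. x \<otimes> x) ` carrier G = carrier G"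
    using card_subset_eq[OF finG sub] card_image[OF inj] by simp
  hence "z \<in> (\<lambda>x. x \<otimes> x) ` carrier G" using z by simp
  thus ?thesis by blast
qed

lemma ex_ne: "\<exists>f\<in>carrier G. f \<noteq> \<one>"
proof (rule ccontr)
  assume "\<not> ?thesis"
  hence "carrier G \<subseteq> {\<one>}" by blast
  hence "card (carrier G) \<le> card {\<one>}" by (intro card_mono) auto
  thus False using bigG by simp
qed

abbreviation MA where "MA \<equiv> model_add G"
abbreviation MC where "MC \<equiv> model_comp G"

lemma madd: "(f1, k1) \<otimes>\<^bsub>MA\<^esub> (f2, k2) = (f1 \<otimes> (if k1 then inv f2 else f2), k1 \<noteq> k2)"
  by (simp add: model_add_def sgn_act_def)
lemma mcomp: "(f1, k1) \<otimes>\<^bsub>MC\<^esub> (f2, k2) =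
   ((if k2 then inv f1 else f1) \<otimes> (if k1 then inv f2 else f2), k1 \<noteq> k2)"
  by (simp add: model_comp_def sgn_act_def)
lemma cMA[simp]: "carrier MA = carrier G \<times> UNIV" by (simp add: model_add_def)
lemma cMC[simp]: "carrier MC = carrier G \<times> UNIV" by (simp add: model_comp_def)
lemma oMA[simp]: "\<one>\<^bsub>MA\<^esub> = (\<one>, False)" by (simp add: model_add_def)
lemma oMC[simp]: "\<one>\<^bsub>MC\<^esub> = (\<one>, False)" by (simp add: model_comp_def)

lemma gMA: "group MA"
proof (rule groupI)
  fix x y assume "x \<in> carrier MA" "y \<in> carrier MA"
  thus "x \<otimes>\<^bsub>MA\<^esub> y \<in> carrier MA" by (cases x; cases y) (simp add: madd)
next
  show "\<one>\<^bsub>MA\<^esub> \<in> carrier MA" by simp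
next
  fix x y z assume "x \<in> carrier MA" "y \<in> carrier MA" "z \<in> carrier MA"
  thus "x \<otimes>\<^bsub>MA\<^esub> y \<otimes>\<^bsub>MA\<^esub> z = x \<otimes>\<^bsub>MA\<^esub> (y \<otimes>\<^bsub>MA\<^esub> z)"
    by (cases x; cases y; cases z) (auto simp: madd m_ac inv_mult cc)
next
  fix x assume "x \<in> carrier MA"
  thus "\<one>\<^bsub>MA\<^esub> \<otimes>\<^bsub>MA\<^esub> x = x" by (cases x) (simp add: madd)
next
  fix x assume x: "x \<in> carrier MA"
  obtain f k where fk: "x = (f, k)" "f \<in> carrier G" using x by auto
  show "\<exists>y\<in>carrier MA. y \<otimes>\<^bsub>MA\<^esub> x = \<one>\<^bsub>MA\<^esub>"
    by (rule bexI[where x="(if k then f else inv f, k)"]) (use fk in \<open>auto simp: madd\<close>)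
qed

lemma gMC: "group MC"
proof (rule groupI)
  fix x y assume "x \<in> carrier MC" "y \<in> carrier MC"
  thus "x \<otimes>\<^bsub>MC\<^esub> y \<in> carrier MC" by (cases x; cases y) (simp add: mcomp)
next
  show "\<one>\<^bsub>MC\<^esub> \<in> carrier MC" by simp
next
  fix x y z assume "x \<in> carrier MC" "y \<in> carrier MC" "z \<in> carrier MC"
  thus "x \<otimes>\<^bsub>MC\<^esub> y \<otimes>\<^bsub>MC\<^esub> z = x \<otimes>\<^bsub>MC\<^esub> (y \<otimes>\<^bsub>MC\<^esub> z)"
    by (cases x; cases y; cases z) (auto simp: mcomp m_ac inv_mult cc)
next
  fix x assume "x \<in> carrier MC"
  thus "\<one>\<^bsub>MC\<^esub> \<otimes>\<^bsub>MC\<^esub> x = x" by (cases x) (simp add: mcomp)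
next
  fix x assume x: "x \<in> carrier MC"
  obtain f k where fk: "x = (f, k)" "f \<in> carrier G" using x by auto
  show "\<exists>y\<in>carrier MC. y \<otimes>\<^bsub>MC\<^esub> x = \<one>\<^bsub>MC\<^esub>"
    by (rule bexI[where x="(inv f, k)"]) (use fk in \<open>auto simp: mcomp inv_mult\<close>)
qed

lemma invMA: "f \<in> carrier G \<Longrightarrow> inv\<^bsub>MA\<^esub> (f, k) = (if k then f else inv f, k)"
  by (rule group.inv_equality[OF gMA]) (auto simp: madd)

lemma brace: "skew_brace MA MC"
  unfolding skew_brace_def
proof (intro conjI gMA gMC ballI)
  show "carrier MA = carrier MC" by simp
  fix a b c assume "a \<in> carrier MC" "b \<in> carrier MC" "c \<in> carrier MC"
  then obtain f1 k1 f2 k2 f3 k3 where abc: "a = (f1, k1)" "b = (f2, k2)" "c = (f3, k3)"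
    "f1 \<in> carrier G" "f2 \<in> carrier G" "f3 \<in> carrier G" by auto
  show "a \<otimes>\<^bsub>MC\<^esub> (b \<otimes>\<^bsub>MA\<^esub> c) =
        (a \<otimes>\<^bsub>MC\<^esub> b) \<otimes>\<^bsub>MA\<^esub> inv\<^bsub>MA\<^esub> a \<otimes>\<^bsub>MA\<^esub> (a \<otimes>\<^bsub>MC\<^esub> c)"
    using abc by (cases k1; cases k2; cases k3) (auto simp: madd mcomp invMA m_ac inv_mult cc)
qed

lemma lamM: "f \<in> carrier G \<Longrightarrow> g \<in> carrier G \<Longrightarrow>
  brace_lambda MA MC (f, k) (g, l) =
    (if l then (if k then f \<otimes> f \<otimes> g else inv f \<otimes> inv f \<otimes> g) else g, l)"
  by (cases k; cases l) (auto simp: brace_lambda_def madd mcomp invMA m_ac inv_mult cc)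

lemma FixM: "brace_Fix MA MC = carrier G \<times> {False}"
proof
  show "carrier G \<times> {False} \<subseteq> brace_Fix MA MC"
    unfolding brace_Fix_def by (auto simp: lamM)
  show "brace_Fix MA MC \<subseteq> carrier G \<times> {False}"
  proof
    fix p assume p: "p \<in> brace_Fix MA MC"
    then obtain g l where gl: "p = (g, l)" "g \<in> carrier G" unfolding brace_Fix_def by auto
    obtain f where f: "f \<in> carrier G" "f \<noteq> \<one>" using ex_ne by blast
    have "brace_lambda MA MC (f, True) (g, l) = (g, l)" using p gl f unfolding brace_Fix_def by auto
    hence "l \<Longrightarrow> f \<otimes> f \<otimes> g = g" using f gl by (simp add: lamM)
    hence "l \<Longrightarrow> f \<otimes> f = \<one>" using f gl by (metis m_closed r_cancel_one)
    hence "\<not> l" using dbl_one f by blast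
    thus "p \<in> carrier G \<times> {False}" using gl by simp
  qed
qed

lemma KerM: "brace_ker MA MC = {\<one>} \<times> UNIV"
proof
  show "{\<one>} \<times> UNIV \<subseteq> brace_ker MA MC"
    unfolding brace_ker_def by (auto simp: lamM)
  show "brace_ker MA MC \<subseteq> {\<one>} \<times> UNIV"
  proof
    fix p assume p: "p \<in> brace_ker MA MC"
    then obtain f k where fk: "p = (f, k)" "f \<in> carrier G" unfolding brace_ker_def by auto
    have "brace_lambda MA MC (f, k) (\<one>, True) = (\<one>, True)" using p fk unfolding brace_ker_def by auto
    note lf = this
    have "f = \<one>"
    proof (cases k)
      case True
      hence "f \<otimes> f = \<one>" using lf fk by (simp add: lamM)
      thus ?thesis using dbl_one[of f] fk by simp
    next
      case False
      hence "inv f \<otimes> inv f = \<one>" using lf fk by (simp add: lamM)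
      hence "inv f = \<one>" using dbl_one[of "inv f"] fk by simp
      thus ?thesis using fk by (metis inv_inv inv_one)
    qed
    thus "p \<in> {\<one>} \<times> UNIV" using fk by simp
  qed
qed

lemma orbF: assumes g: "g \<in> carrier G"
  shows "(\<lambda>a. brace_lambda MA MC a (g, False)) ` carrier MC = {(g, False)}"
proof -
  have "\<And>a. a \<in> carrier MC \<Longrightarrow> brace_lambda MA MC a (g, False) = (g, False)"
    using g lamM by auto
  moreover have "carrier MC \<noteq> {}" by auto
  ultimately show ?thesis by auto
qed

lemma orbT: assumes g: "g \<in> carrier G"
  shows "(\<lambda>a. brace_lambda MA MC a (g, True)) ` carrier MC = carrier G \<times> {True}"
proof
  show "(\<lambda>a. brace_lambda MA MC a (g, True)) ` carrier MC \<subseteq> carrier G \<times> {True}"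
    using g by (auto simp: lamM)
  show "carrier G \<times> {True} \<subseteq> (\<lambda>a. brace_lambda MA MC a (g, True)) ` carrier MC"
  proof
    fix q assume "q \<in> carrier G \<times> {True}"
    then obtain z where z: "q = (z, True)" "z \<in> carrier G" by auto
    obtain x where x: "x \<in> carrier G" "x \<otimes> x = z \<otimes> inv g" using dbl_surj z g by (meson inv_closed m_closed)
    have "brace_lambda MA MC (x, True) (g, True) = (x \<otimes> x \<otimes> g, True)"
      using x g lamM by simp
    also have "x \<otimes> x \<otimes> g = z" using x(2) z g by (simp add: m_assoc)
    finally have eq: "brace_lambda MA MC (x, True) (g, True) = q" using z by simp
    have "(x, True) \<in> carrier MC" using x by simp
    thus "q \<in> (\<lambda>a. brace_lambda MA MC a (g, True)) ` carrier MC"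
      using eq by (rule rev_image_eqI[OF _ sym])
  qed
qed

lemma vertM: "Lambda_vertices MA MC = {carrier G \<times> {True}}"
proof
  show "Lambda_vertices MA MC \<subseteq> {carrier G \<times> {True}}"
  proof
    fix S assume S: "S \<in> Lambda_vertices MA MC"
    have c: "card S > 1" and "S \<in> lambda_orbits MA MC" using S unfolding Lambda_vertices_def by auto
    hence "S \<in> (\<lambda>b. (\<lambda>a. brace_lambda MA MC a b) ` carrier MC) ` carrier MA"
      unfolding lambda_orbits_def by simp
    then obtain b where b: "b \<in> carrier MA" "S = (\<lambda>a. brace_lambda MA MC a b) ` carrier MC"
      by (rule imageE) blast
    obtain g l where gl: "b = (g, l)" "g \<in> carrier G" using b by auto
    show "S \<in> {carrier G \<times> {True}}"
    proof (cases l)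
      case True thus ?thesis using orbT[OF gl(2)] b gl by simp
    next
      case False
      hence "S = {(g, False)}" using orbF[OF gl(2)] b gl by simp
      thus ?thesis using c by simp
    qed
  qed
  show "{carrier G \<times> {True}} \<subseteq> Lambda_vertices MA MC"
  proof -
    have o: "(\<lambda>a. brace_lambda MA MC a (\<one>, True)) ` carrier MC = carrier G \<times> {True}"
      using orbT[of \<one>] by simp
    have "(\<one>, True) \<in> carrier MA" by simp
    hence "carrier G \<times> {True} \<in> lambda_orbits MA MC"
      unfolding lambda_orbits_def by (rule rev_image_eqI) (use o in simp)
    moreover have "card (carrier G \<times> {True}) > 1" using bigG by (simp add: card_cartesian_product)
    ultimately show ?thesis unfolding Lambda_vertices_def by simp
  qed
qed

lemma converse:
  "skew_brace MA MC \<and> brace_Fix MA MC = carrier G \<times> {False} \<and>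
   brace_ker MA MC = {\<one>} \<times> (UNIV :: bool set) \<and> card (Lambda_vertices MA MC) = 1"
  using brace FixM KerM vertM by simp

end

theorem mainTheorem14:
  shows
  "(\<forall>(P :: 'a monoid) (C :: 'a monoid).
      skew_brace P C \<and> finite (carrier P) \<and> card (Lambda_vertices P C) = 1 \<and>
      brace_ker P C \<inter> brace_Fix P C = {\<one>\<^bsub>P\<^esub>} \<longrightarrow>
        comm_group (P\<lparr>carrier := brace_Fix P C\<rparr>) \<and> odd (card (brace_Fix P C)) \<and>
        trivial_skew_brace (P\<lparr>carrier := brace_Fix P C\<rparr>) (C\<lparr>carrier := brace_Fix P C\<rparr>) \<and>
        (\<exists>h. skew_brace_iso P C (model_add (P\<lparr>carrier := brace_Fix P C\<rparr>))
                                (model_comp (P\<lparr>carrier := brace_Fix P C\<rparr>)) h))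
   \<and>
   (\<forall>(G :: 'b monoid).
      comm_group G \<and> finite (carrier G) \<and> odd (card (carrier G)) \<and> card (carrier G) > 1 \<longrightarrow>
        skew_brace (model_add G) (model_comp G) \<and>
        brace_Fix (model_add G) (model_comp G) = carrier G \<times> {False} \<and>
        brace_ker (model_add G) (model_comp G) = {\<one>\<^bsub>G\<^esub>} \<times> (UNIV :: bool set) \<and>
        card (Lambda_vertices (model_add G) (model_comp G)) = 1)"
proof (rule conjI; intro allI impI)
  fix P C :: "'a monoid"
  assume h: "skew_brace P C \<and> finite (carrier P) \<and> card (Lambda_vertices P C) = 1 \<and>
      brace_ker P C \<inter> brace_Fix P C = {\<one>\<^bsub>P\<^esub>}"
  interpret sbrace_main P C
    using h by (simp add: sbrace_main_def sbrace_def sbrace_main_axioms_def)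
  show "comm_group (P\<lparr>carrier := brace_Fix P C\<rparr>) \<and> odd (card (brace_Fix P C)) \<and>
        trivial_skew_brace (P\<lparr>carrier := brace_Fix P C\<rparr>) (C\<lparr>carrier := brace_Fix P C\<rparr>) \<and>
        (\<exists>h. skew_brace_iso P C (model_add (P\<lparr>carrier := brace_Fix P C\<rparr>))
                                (model_comp (P\<lparr>carrier := brace_Fix P C\<rparr>)) h)"
    using forward by simp
next
  fix G :: "'b monoid"
  assume h: "comm_group G \<and> finite (carrier G) \<and> odd (card (carrier G)) \<and> card (carrier G) > 1"
  interpret cmodel G using h by (simp add: cmodel_def cmodel_axioms_def)
  show "skew_brace (model_add G) (model_comp G) \<and>
        brace_Fix (model_add G) (model_comp G) = carrier G \<times> {False} \<and>
        brace_ker (model_add G) (model_comp G) = {\<one>\<^bsub>G\<^esub>} \<times> (UNIV :: bool set) \<and>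
        card (Lambda_vertices (model_add G) (model_comp G)) = 1"
    using converse by simp
qed

end
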